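(* Let $\mathcal{R}$ be a cell space, let $A\subseteq M$, let $e\in G/G_0$, and let $E,E'\subseteq G/G_0$. Then: (1) $A^{-\{G_0\}}=A$, $A^{+\{G_0\}}=A$, and $\partial_{\{G_0\}}A=\emptyset$. (2) $A^{-\{G_0,e\}}=A\cap(\cdot\triangleleft e)^{-1}(A)$, $A^{+\{G_0,e\}}=A\cup(\cdot\triangleleft e)^{-1}(A)$, and $\partial_{\{G_0,e\}}A=(A\setminus(\cdot\triangleleft e)^{-1}(A))\cup((\cdot\triangleleft e)^{-1}(A)\setminus A)$. (3) $(M\setminus A)^{-E}=M\setminus A^{+E}$ and $(M\setminus A)^{+E}=M\setminus A^{-E}$. (4) If $E\subseteq E'$, then $A^{-E}\supseteq A^{-E'}$, $A^{+E}\subseteq A^{+E'}$, and $\partial_E A\subseteq\partial_{E'}A$. (5) If $G_0\in E$, then $A^{-E}\subseteq A\subseteq A^{+E}$. (6) If $G_0\in E$ and $A$ is finite, then $A^{-E}$ is finite. (7) If $G_0$, $A$ and $E$ are finite, then $A^{+E}$ and $\partial_E A$ are finite; more precisely $|A^{+E}|\leq|G_0|\cdot|A|\cdot|E|$. (8) If $g\in G$ and $G_0\cdot E\subseteq E$, then $g\triangleright A^{-E}=(g\triangleright A)^{-E}$, $g\triangleright A^{+E}=(g\triangleright A)^{+E}$, and $g\triangleright\partial_E A=\partial_E(g\triangleright A)$. (9) If $m\in M$, $G_0\cdot E\subseteq E$, and $\iota\colon M\to G/G_0$, $m'\mapsto G_{m_0,m'}$, then $m\triangleleft\iota(A^{-E})=(m\triangleleft\iota(A))^{-E}$,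 $m\triangleleft\iota(A^{+E})=(m\triangleleft\iota(A))^{+E}$, and $m\triangleleft\iota(\partial_E A)=\partial_E(m\triangleleft\iota(A))$.
   Context: A cell space $\mathcal{R}$ consists of a group $G$ acting transitively on the left on a nonempty set $M$ via $\triangleright$, a point $m_0\in M$ and a family $(g_{m_0,m})_{m\in M}$ in $G$ with $g_{m_0,m}\triangleright m_0=m$. $G_0$ is the stabiliser of $m_0$, $G/G_0$ the set of left cosets, with $G$ acting by $g\cdot hG_0=ghG_0$ (so $G_0\cdot E=\{g_0\cdot e:g_0\in G_0,e\in E\}$). For $m,m'\in M$, $G_{m_0,m'}=\{g\in G: g\triangleright m_0=m'\}$ (a left coset of $G_0$). The right semi-action $\triangleleft\colon M\times G/G_0\to M$ is $m\triangleleft gG_0=g_{m_0,m}g\triangleright m_0$; for $E\subseteq G/G_0$, $m\triangleleft E=\{m\triangleleft e:e\in E\}$, $(\cdot\triangleleft e)^{-1}(A)=\{m\in M: m\triangleleft e\in A\}$, and $g\triangleright A=\{g\triangleright a:a\in A\}$. For $A\subseteq M$ and $E\subseteq G/G_0$: $A^{-E}=\{m\in M: m\triangleleft E\subseteq A\}$, $A^{+E}=\{m\in M:(m\triangleleft E)\cap A\neq\emptyset\}$, $\partial_E A=A^{+E}\setminus A^{-E}$. *)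

theory Defs
  imports "HOL-Algebra.Group_Action" "HOL-Algebra.Left_Coset"
begin

definition cell_space ::
  "('g, 'b) monoid_scheme \<Rightarrow> 'm set \<Rightarrow> ('g \<Rightarrow> 'm \<Rightarrow> 'm) \<Rightarrow> 'm \<Rightarrow> ('m \<Rightarrow> 'g) \<Rightarrow> bool" where
  "cell_space G M act m0 gc \<longleftrightarrow>
     transitive_action G M act \<and> M \<noteq> {} \<and> m0 \<in> M \<and>
     (\<forall>m\<in>M. gc m \<in> carrier G \<and> act (gc m) m0 = m)"

abbreviation G0 :: "('g, 'b) monoid_scheme \<Rightarrow> ('g \<Rightarrow> 'm \<Rightarrow> 'm) \<Rightarrow> 'm \<Rightarrow> 'g set" where
  "G0 G act m0 \<equiv> stabilizer G act m0"

abbreviation cosets :: "('g, 'b) monoid_scheme \<Rightarrow> ('g \<Rightarrow> 'm \<Rightarrow> 'm) \<Rightarrow> 'm \<Rightarrow> 'g set set" where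
  "cosets G act m0 \<equiv> lcosets\<^bsub>G\<^esub> (G0 G act m0)"

definition Gm :: "('g, 'b) monoid_scheme \<Rightarrow> ('g \<Rightarrow> 'm \<Rightarrow> 'm) \<Rightarrow> 'm \<Rightarrow> 'm \<Rightarrow> 'g set" where
  "Gm G act m0 m' = {g \<in> carrier G. act g m0 = m'}"

text \<open>Right semi-action: m \<triangleleft> gG_0 = (g_{m0,m} g) \<triangleright> m0 (independent of representative).\<close>
definition semi_act :: "('g, 'b) monoid_scheme \<Rightarrow> ('g \<Rightarrow> 'm \<Rightarrow> 'm) \<Rightarrow> 'm \<Rightarrow> ('m \<Rightarrow> 'g)
    \<Rightarrow> 'm \<Rightarrow> 'g set \<Rightarrow> 'm" where
  "semi_act G act m0 gc m e = act (gc m \<otimes>\<^bsub>G\<^esub> (SOME g. g \<in> e)) m0"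

definition erosion where
  "erosion G M act m0 gc A E = {m \<in> M. (semi_act G act m0 gc m) ` E \<subseteq> A}"

definition dilation where
  "dilation G M act m0 gc A E = {m \<in> M. (semi_act G act m0 gc m) ` E \<inter> A \<noteq> {}}"

definition boundary where
  "boundary G M act m0 gc A E = dilation G M act m0 gc A E - erosion G M act m0 gc A E"

definition preim where
  "preim G M act m0 gc e A = {m \<in> M. semi_act G act m0 gc m e \<in> A}"

definition stab_mult where
  "stab_mult G act m0 E = {g0 <#\<^bsub>G\<^esub> e | g0 e. g0 \<in> G0 G act m0 \<and> e \<in> E}"

end

theory Submission
  imports Defs
begin


locale cs =
  fixes G (structure) and M :: "'m set" and act :: "'g \<Rightarrow> 'm \<Rightarrow> 'm" and m0 :: 'm and gc :: "'m \<Rightarrow> 'g"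
  assumes R: "cell_space G M act m0 gc"
begin

lemma grp: "group G"
  using R unfolding cell_space_def transitive_action_def group_action_def group_hom_def by auto

lemma ga: "group_action G M act"
  using R unfolding cell_space_def transitive_action_def by auto

lemma m0M: "m0 \<in> M" using R unfolding cell_space_def by auto

lemma gcP: "m \<in> M \<Longrightarrow> gc m \<in> carrier G \<and> act (gc m) m0 = m"
  using R unfolding cell_space_def by auto

lemma trans: "x \<in> M \<Longrightarrow> y \<in> M \<Longrightarrow> \<exists>g\<in>carrier G. act g x = y"
  using R unfolding cell_space_def transitive_action_def transitive_action_axioms_def by auto

end

sublocale cs \<subseteq> group G by (rule grp)
sublocale cs \<subseteq> group_action G M act by (rule ga)

context cs begin

lemma subH: "subgroup (stabilizer G act m0) G"
  by (rule stabilizer_subgroup[OF m0M])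

lemma H_carr: "stabilizer G act m0 \<subseteq> carrier G"
  by (auto simp: stabilizer_def)

lemma stab_act: "k \<in> carrier G \<Longrightarrow> h \<in> stabilizer G act m0 \<Longrightarrow> act (k \<otimes> h) m0 = act k m0"
  by (simp add: composition_rule m0M stabilizer_def)

lemma rep: assumes "x \<in> carrier G" "y \<in> x <# stabilizer G act m0" "k \<in> carrier G"
  shows "act (k \<otimes> y) m0 = act (k \<otimes> x) m0"
proof -
  obtain h where h: "h \<in> stabilizer G act m0" "y = x \<otimes> h"
    using assms(2) unfolding l_coset_def by auto
  have hc: "h \<in> carrier G" using h H_carr by auto
  have "k \<otimes> y = (k \<otimes> x) \<otimes> h" using h hc assms by (simp add: m_assoc)
  then show ?thesis using stab_act[OF _ h(1), of "k \<otimes> x"] assms by simp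
qed

lemma sa_coset: assumes "m \<in> M" "x \<in> carrier G"
  shows "semi_act G act m0 gc m (x <# stabilizer G act m0) = act (gc m \<otimes> x) m0"
proof -
  have "(SOME g. g \<in> x <# stabilizer G act m0) \<in> x <# stabilizer G act m0"
    by (rule someI, rule lcos_self[OF assms(2) subH])
  then show ?thesis unfolding semi_act_def using rep assms gcP by blast
qed

lemma cosE: "e \<in> lcosets (stabilizer G act m0) \<Longrightarrow> \<exists>x\<in>carrier G. e = x <# stabilizer G act m0"
  by (auto simp: LCOSETS_def)

lemma cos_carr: "e \<in> lcosets (stabilizer G act m0) \<Longrightarrow> e \<subseteq> carrier G"
  using lcosets_subset_PowG[OF subH] by auto

lemma sa_M: assumes "m \<in> M" "e \<in> lcosets (stabilizer G act m0)"
  shows "semi_act G act m0 gc m e \<in> M"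
proof -
  obtain x where x: "x \<in> carrier G" "e = x <# stabilizer G act m0" using cosE assms by blast
  show ?thesis using sa_coset[OF assms(1) x(1)] x gcP[OF assms(1)] element_image m0M
    by (metis m_closed)
qed

lemma sa_H: assumes "m \<in> M" shows "semi_act G act m0 gc m (stabilizer G act m0) = m"
proof -
  have "stabilizer G act m0 = \<one> <# stabilizer G act m0" using lcos_mult_one[OF H_carr] by simp
  then have "semi_act G act m0 gc m (stabilizer G act m0) = act (gc m \<otimes> \<one>) m0"
    using sa_coset[OF assms, of \<one>] by simp
  then show ?thesis using gcP[OF assms] by simp
qed

lemma sa_image: assumes "m \<in> M" "E \<subseteq> lcosets (stabilizer G act m0)"
  shows "semi_act G act m0 gc m ` E = (\<lambda>y. act (gc m \<otimes> y) m0) ` \<Union>E"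
proof
  show "semi_act G act m0 gc m ` E \<subseteq> (\<lambda>y. act (gc m \<otimes> y) m0) ` \<Union>E"
  proof
    fix z assume "z \<in> semi_act G act m0 gc m ` E"
    then obtain e where e: "e \<in> E" "z = semi_act G act m0 gc m e" by auto
    obtain x where x: "x \<in> carrier G" "e = x <# stabilizer G act m0" using cosE assms e by blast
    have "x \<in> e" using x lcos_self[OF x(1) subH] by simp
    then show "z \<in> (\<lambda>y. act (gc m \<otimes> y) m0) ` \<Union>E"
      using e x sa_coset[OF assms(1) x(1)] by blast
  qed
next
  show "(\<lambda>y. act (gc m \<otimes> y) m0) ` \<Union>E \<subseteq> semi_act G act m0 gc m ` E"
  proof
    fix z assume "z \<in> (\<lambda>y. act (gc m \<otimes> y) m0) ` \<Union>E"
    then obtain y e where ye: "e \<in> E" "y \<in> e" "z = act (gc m \<otimes> y) m0" by auto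
    obtain x where x: "x \<in> carrier G" "e = x <# stabilizer G act m0" using cosE assms ye by blast
    have "z = semi_act G act m0 gc m e"
      using rep[OF x(1), of y "gc m"] ye x sa_coset[OF assms(1) x(1)] gcP[OF assms(1)] by simp
    then show "z \<in> semi_act G act m0 gc m ` E" using ye by blast
  qed
qed

lemma closed: assumes "stab_mult G act m0 E \<subseteq> E" "h \<in> stabilizer G act m0" "y \<in> \<Union>E"
  shows "h \<otimes> y \<in> \<Union>E"
proof -
  obtain e where e: "e \<in> E" "y \<in> e" using assms by auto
  have "h <# e \<in> E" using assms(1,2) e unfolding stab_mult_def by blast
  moreover have "h \<otimes> y \<in> h <# e" using e unfolding l_coset_def by auto
  ultimately show ?thesis by blast
qed

lemma shift: assumes "k \<in> carrier G" "h \<in> stabilizer G act m0" "stab_mult G act m0 E \<subseteq> E"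
   "E \<subseteq> lcosets (stabilizer G act m0)"
  shows "(\<lambda>y. act (k \<otimes> h \<otimes> y) m0) ` \<Union>E = (\<lambda>y. act (k \<otimes> y) m0) ` \<Union>E"
proof -
  have UC: "\<Union>E \<subseteq> carrier G" using assms(4) cos_carr by blast
  have hc: "h \<in> carrier G" using assms(2) H_carr by auto
  have ih: "inv h \<in> stabilizer G act m0" using subgroup.m_inv_closed[OF subH assms(2)] by simp
  show ?thesis
  proof
    show "(\<lambda>y. act (k \<otimes> h \<otimes> y) m0) ` \<Union>E \<subseteq> (\<lambda>y. act (k \<otimes> y) m0) ` \<Union>E"
    proof
      fix z assume "z \<in> (\<lambda>y. act (k \<otimes> h \<otimes> y) m0) ` \<Union>E"
      then obtain y where y: "y \<in> \<Union>E" "z = act (k \<otimes> h \<otimes> y) m0" by auto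
      have "k \<otimes> h \<otimes> y = k \<otimes> (h \<otimes> y)" using y UC hc assms(1) by (simp add: m_assoc subset_iff)
      then show "z \<in> (\<lambda>y. act (k \<otimes> y) m0) ` \<Union>E" using closed[OF assms(3,2) y(1)] y by auto
    qed
  next
    show "(\<lambda>y. act (k \<otimes> y) m0) ` \<Union>E \<subseteq> (\<lambda>y. act (k \<otimes> h \<otimes> y) m0) ` \<Union>E"
    proof
      fix z assume "z \<in> (\<lambda>y. act (k \<otimes> y) m0) ` \<Union>E"
      then obtain y where y: "y \<in> \<Union>E" "z = act (k \<otimes> y) m0" by auto
      have yc: "y \<in> carrier G" using y UC by auto
      have "k \<otimes> h \<otimes> (inv h \<otimes> y) = k \<otimes> y" using yc hc assms(1)
        by (simp add: m_assoc[symmetric]) (simp add: m_assoc)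
      then show "z \<in> (\<lambda>y. act (k \<otimes> h \<otimes> y) m0) ` \<Union>E" using closed[OF assms(3) ih y(1)] y
        by (metis image_eqI)
    qed
  qed
qed

lemma gc_act: assumes "g \<in> carrier G" "m \<in> M"
  shows "\<exists>h\<in>stabilizer G act m0. gc (act g m) = g \<otimes> gc m \<otimes> h"
proof -
  have gm: "act g m \<in> M" using element_image assms by blast
  have c1: "g \<otimes> gc m \<in> carrier G" using assms gcP by auto
  have c2: "gc (act g m) \<in> carrier G" using gcP[OF gm] by auto
  define h where "h = inv (g \<otimes> gc m) \<otimes> gc (act g m)"
  have hc: "h \<in> carrier G" using c1 c2 h_def by auto
  have a1: "act (g \<otimes> gc m) m0 = act g m" using composition_rule[OF m0M assms(1)] gcP[OF assms(2)] by simp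
  have "act h m0 = act (inv (g \<otimes> gc m)) (act (gc (act g m)) m0)"
    unfolding h_def using composition_rule[OF m0M] c1 c2 by simp
  also have "\<dots> = act (inv (g \<otimes> gc m)) (act g m)" using gcP[OF gm] by simp
  also have "\<dots> = m0" using orbit_sym_aux[OF c1 m0M a1] .
  finally have "h \<in> stabilizer G act m0" using hc by (simp add: stabilizer_def)
  moreover have "g \<otimes> gc m \<otimes> h = gc (act g m)" unfolding h_def using c1 c2
    by (simp add: m_assoc[symmetric])
  ultimately show ?thesis by metis
qed

lemma equivar: assumes "g \<in> carrier G" "m \<in> M" "E \<subseteq> lcosets (stabilizer G act m0)"
   "stab_mult G act m0 E \<subseteq> E"
  shows "semi_act G act m0 gc (act g m) ` E = act g ` semi_act G act m0 gc m ` E"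
proof -
  have gm: "act g m \<in> M" using element_image assms by blast
  obtain h where h: "h \<in> stabilizer G act m0" "gc (act g m) = g \<otimes> gc m \<otimes> h" using gc_act assms by blast
  have UC: "\<Union>E \<subseteq> carrier G" using assms(3) cos_carr by blast
  have gcm: "gc m \<in> carrier G" using gcP assms by auto
  have "semi_act G act m0 gc (act g m) ` E = (\<lambda>y. act (g \<otimes> gc m \<otimes> h \<otimes> y) m0) ` \<Union>E"
    using sa_image[OF gm assms(3)] h by simp
  also have "\<dots> = (\<lambda>y. act (g \<otimes> gc m \<otimes> y) m0) ` \<Union>E"
    using shift[OF _ h(1) assms(4,3)] assms gcm by simp
  also have "\<dots> = act g ` (\<lambda>y. act (gc m \<otimes> y) m0) ` \<Union>E"
  proof -
    have "\<And>y. y \<in> \<Union>E \<Longrightarrow> act (g \<otimes> gc m \<otimes> y) m0 = act g (act (gc m \<otimes> y) m0)"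
      using UC gcm assms(1) composition_rule[OF m0M] by (simp add: m_assoc subset_iff)
    then show ?thesis by (auto simp: image_image intro!: image_cong)
  qed
  also have "\<dots> = act g ` semi_act G act m0 gc m ` E" using sa_image[OF assms(2,3)] by simp
  finally show ?thesis .
qed

lemma fiber: assumes fH: "finite (stabilizer G act m0)" and e': "e' \<in> lcosets (stabilizer G act m0)"
  and a: "a \<in> M"
  shows "finite {m \<in> M. semi_act G act m0 gc m e' = a} \<and>
    card {m \<in> M. semi_act G act m0 gc m e' = a} \<le> card (stabilizer G act m0)"
proof -
  let ?S = "{m \<in> M. semi_act G act m0 gc m e' = a}"
  let ?H = "stabilizer G act m0"
  obtain x where x: "x \<in> carrier G" "e' = x <# stabilizer G act m0" using cosE e' by blast
  obtain k where k: "k \<in> carrier G" "act k m0 = a" using trans[OF m0M a] by blast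
  define \<phi> where "\<phi> m = inv k \<otimes> gc m \<otimes> x" for m
  have im: "\<phi> ` ?S \<subseteq> ?H"
  proof
    fix y assume "y \<in> \<phi> ` ?S"
    then obtain m where m: "m \<in> M" "semi_act G act m0 gc m e' = a" "y = \<phi> m" by auto
    have gcm: "gc m \<in> carrier G" using gcP m by auto
    have a1: "act (gc m \<otimes> x) m0 = a" using m sa_coset[OF m(1) x(1)] x by simp
    have ass: "inv k \<otimes> gc m \<otimes> x = inv k \<otimes> (gc m \<otimes> x)" using gcm x k by (simp add: m_assoc)
    have "act y m0 = act (inv k) (act (gc m \<otimes> x) m0)"
      unfolding m \<phi>_def ass using composition_rule[OF m0M, of "inv k" "gc m \<otimes> x"] gcm x k by simp
    also have "\<dots> = m0" using a1 orbit_sym_aux[OF k(1) m0M k(2)] by simp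
    finally show "y \<in> ?H" unfolding stabilizer_def using m \<phi>_def gcm x k by simp
  qed
  have inj: "inj_on \<phi> ?S"
  proof (rule inj_onI)
    fix m1 m2 assume m1: "m1 \<in> ?S" and m2: "m2 \<in> ?S" and eq: "\<phi> m1 = \<phi> m2"
    have c1: "gc m1 \<in> carrier G" "act (gc m1) m0 = m1" using gcP m1 by auto
    have c2: "gc m2 \<in> carrier G" "act (gc m2) m0 = m2" using gcP m2 by auto
    have d1: "inv k \<otimes> gc m1 \<in> carrier G" "inv k \<otimes> gc m2 \<in> carrier G" using c1 c2 k by auto
    have "inv k \<otimes> gc m1 = inv k \<otimes> gc m2"
      using eq right_cancel[OF x(1) d1] unfolding \<phi>_def by blast
    moreover have "inv k \<in> Units G" using k Units_eq by simp
    ultimately have "gc m1 = gc m2" using Units_l_cancel c1 c2 by blast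
    then show "m1 = m2" using c1 c2 by metis
  qed
  show ?thesis using inj_on_finite[OF inj im fH] card_inj_on_le[OF inj im fH] by simp
qed

end

lemma transport:
  assumes inj: "inj_on f M" and surj: "f ` M = M" and A: "A \<subseteq> M"
    and sM: "\<And>m. m \<in> M \<Longrightarrow> s m ` E \<subseteq> M"
    and eq: "\<And>m. m \<in> M \<Longrightarrow> s (f m) ` E = f ` s m ` E"
  shows "f ` {m \<in> M. s m ` E \<subseteq> A} = {m \<in> M. s m ` E \<subseteq> f ` A}"
    and "f ` {m \<in> M. s m ` E \<inter> A \<noteq> {}} = {m \<in> M. s m ` E \<inter> f ` A \<noteq> {}}"
proof -
  have key1: "s m ` E \<subseteq> A \<longleftrightarrow> s (f m) ` E \<subseteq> f ` A" if "m \<in> M" for m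
    unfolding eq[OF that] image_subset_iff using sM[OF that] A inj_on_image_mem_iff[OF inj] by blast
  have key2: "s m ` E \<inter> A \<noteq> {} \<longleftrightarrow> s (f m) ` E \<inter> f ` A \<noteq> {}" if "m \<in> M" for m
  proof -
    have "f ` (s m ` E \<inter> A) = f ` s m ` E \<inter> f ` A"
      using inj sM[OF that] A by (intro inj_on_image_Int) auto
    then show ?thesis using eq[OF that] by (metis image_is_empty)
  qed
  show "f ` {m \<in> M. s m ` E \<subseteq> A} = {m \<in> M. s m ` E \<subseteq> f ` A}"
  proof
    show "f ` {m \<in> M. s m ` E \<subseteq> A} \<subseteq> {m \<in> M. s m ` E \<subseteq> f ` A}"
    proof
      fix y assume "y \<in> f ` {m \<in> M. s m ` E \<subseteq> A}"
      then obtain m where m: "m \<in> M" "s m ` E \<subseteq> A" "y = f m" by blast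
      have "f m \<in> M" using m(1) surj by blast
      then show "y \<in> {m \<in> M. s m ` E \<subseteq> f ` A}" using key1[OF m(1)] m by simp
    qed
    show "{m \<in> M. s m ` E \<subseteq> f ` A} \<subseteq> f ` {m \<in> M. s m ` E \<subseteq> A}"
    proof
      fix y assume y: "y \<in> {m \<in> M. s m ` E \<subseteq> f ` A}"
      then obtain m where "m \<in> M" "y = f m" using surj by blast
      then show "y \<in> f ` {m \<in> M. s m ` E \<subseteq> A}" using key1 y by auto
    qed
  qed
  show "f ` {m \<in> M. s m ` E \<inter> A \<noteq> {}} = {m \<in> M. s m ` E \<inter> f ` A \<noteq> {}}"
  proof
    show "f ` {m \<in> M. s m ` E \<inter> A \<noteq> {}} \<subseteq> {m \<in> M. s m ` E \<inter> f ` A \<noteq> {}}"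
      using key2 surj by blast
    show "{m \<in> M. s m ` E \<inter> f ` A \<noteq> {}} \<subseteq> f ` {m \<in> M. s m ` E \<inter> A \<noteq> {}}"
    proof
      fix y assume y: "y \<in> {m \<in> M. s m ` E \<inter> f ` A \<noteq> {}}"
      then obtain m where "m \<in> M" "y = f m" using surj by blast
      then show "y \<in> f ` {m \<in> M. s m ` E \<inter> A \<noteq> {}}" using key2 y by auto
    qed
  qed
qed

theorem lemma1:
  fixes g :: 'g and m :: 'm and G :: "('g, 'b) monoid_scheme" and M :: "'m set" and act :: "'g \<Rightarrow> 'm \<Rightarrow> 'm"
    and m0 :: 'm and gc :: "'m \<Rightarrow> 'g" and A :: "'m set" and e :: "'g set"
    and E E' :: "'g set set"
  assumes R: "cell_space G M act m0 gc"
    and A: "A \<subseteq> M"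
    and e: "e \<in> cosets G act m0"
    and E: "E \<subseteq> cosets G act m0"
    and E': "E' \<subseteq> cosets G act m0"
  defines "Er \<equiv> erosion G M act m0 gc"
    and "Di \<equiv> dilation G M act m0 gc"
    and "Bd \<equiv> boundary G M act m0 gc"
    and "Pre \<equiv> preim G M act m0 gc"
    and "H \<equiv> G0 G act m0"
    and "\<iota> \<equiv> Gm G act m0"
  shows
    "
    \<comment> \<open>(1)\<close>
    (Er A {H} = A \<and> Di A {H} = A \<and> Bd A {H} = {})
    \<and>
    \<comment> \<open>(2)\<close>
    (Er A {H, e} = A \<inter> Pre e A \<and> Di A {H, e} = A \<union> Pre e A \<and>
     Bd A {H, e} = (A - Pre e A) \<union> (Pre e A - A))
    \<and>
    \<comment> \<open>(3)\<close>
    (Er (M - A) E = M - Di A E \<and> Di (M - A) E = M - Er A E)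
    \<and>
    \<comment> \<open>(4)\<close>
    (E \<subseteq> E' \<longrightarrow> Er A E' \<subseteq> Er A E \<and> Di A E \<subseteq> Di A E' \<and> Bd A E \<subseteq> Bd A E')
    \<and>
    \<comment> \<open>(5)\<close>
    (H \<in> E \<longrightarrow> Er A E \<subseteq> A \<and> A \<subseteq> Di A E)
    \<and>
    \<comment> \<open>(6)\<close>
    (H \<in> E \<longrightarrow> finite A \<longrightarrow> finite (Er A E))
    \<and>
    \<comment> \<open>(7)\<close>
    (finite H \<longrightarrow> finite A \<longrightarrow> finite E \<longrightarrow>
       finite (Di A E) \<and> finite (Bd A E) \<and> card (Di A E) \<le> card H * card A * card E)
    \<and>
    \<comment> \<open>(8)\<close>
    (g \<in> carrier G \<longrightarrow> stab_mult G act m0 E \<subseteq> E \<longrightarrow>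
       act g ` Er A E = Er (act g ` A) E \<and> act g ` Di A E = Di (act g ` A) E \<and>
       act g ` Bd A E = Bd (act g ` A) E)
    \<and>
    \<comment> \<open>(9)\<close>
    (m \<in> M \<longrightarrow> stab_mult G act m0 E \<subseteq> E \<longrightarrow>
       semi_act G act m0 gc m ` \<iota> ` Er A E = Er (semi_act G act m0 gc m ` \<iota> ` A) E \<and>
       semi_act G act m0 gc m ` \<iota> ` Di A E = Di (semi_act G act m0 gc m ` \<iota> ` A) E \<and>
       semi_act G act m0 gc m ` \<iota> ` Bd A E = Bd (semi_act G act m0 gc m ` \<iota> ` A) E)"
proof -
  interpret cs G M act m0 gc by (rule cs.intro[OF R])
  let ?sa = "semi_act G act m0 gc"
  have saM: "\<And>m e. m \<in> M \<Longrightarrow> e \<in> E \<Longrightarrow> ?sa m e \<in> M" using sa_M E by blast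
  have saH: "\<And>m. m \<in> M \<Longrightarrow> ?sa m H = m" using sa_H H_def by simp
  have EM: "\<And>X F. Er X F \<subseteq> M" "\<And>X F. Di X F \<subseteq> M" "\<And>X F. Bd X F \<subseteq> M"
    unfolding Er_def Di_def Bd_def erosion_def dilation_def boundary_def by auto
  have P1: "Er A {H} = A \<and> Di A {H} = A \<and> Bd A {H} = {}"
    unfolding Er_def Di_def Bd_def erosion_def dilation_def boundary_def using A saH by auto
  have P2a: "Er A {H, e} = A \<inter> Pre e A"
    unfolding Er_def erosion_def Pre_def preim_def using A saH by auto
  have P2b: "Di A {H, e} = A \<union> Pre e A"
    unfolding Di_def dilation_def Pre_def preim_def using A saH by auto
  have P2: "Er A {H, e} = A \<inter> Pre e A \<and> Di A {H, e} = A \<union> Pre e A \<and>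
     Bd A {H, e} = (A - Pre e A) \<union> (Pre e A - A)"
    using P2a P2b unfolding Bd_def boundary_def Di_def[symmetric] Er_def[symmetric] by auto
  have P3: "Er (M - A) E = M - Di A E \<and> Di (M - A) E = M - Er A E"
    unfolding Er_def Di_def erosion_def dilation_def using saM by auto
  have P4: "E \<subseteq> E' \<longrightarrow> Er A E' \<subseteq> Er A E \<and> Di A E \<subseteq> Di A E' \<and> Bd A E \<subseteq> Bd A E'"
    unfolding Er_def Di_def Bd_def erosion_def dilation_def boundary_def by auto
  have P5: "H \<in> E \<longrightarrow> Er A E \<subseteq> A \<and> A \<subseteq> Di A E"
    unfolding Er_def Di_def erosion_def dilation_def using A saH by force
  have P6: "H \<in> E \<longrightarrow> finite A \<longrightarrow> finite (Er A E)"
    using P5 finite_subset by blast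
  have P7: "finite H \<longrightarrow> finite A \<longrightarrow> finite E \<longrightarrow>
       finite (Di A E) \<and> finite (Bd A E) \<and> card (Di A E) \<le> card H * card A * card E"
  proof (intro impI)
    assume fH: "finite H" and fA: "finite A" and fE: "finite E"
    define S where "S e' a = {m \<in> M. ?sa m e' = a}" for e' a
    have DU: "Di A E = (\<Union>e'\<in>E. \<Union>a\<in>A. S e' a)"
      unfolding Di_def dilation_def S_def by auto
    have Sb: "finite (S e' a) \<and> card (S e' a) \<le> card H" if e': "e' \<in> E" and a: "a \<in> A" for e' a
      using fiber[of e' a] fH e' a E A unfolding S_def H_def by blast
    have fD: "finite (Di A E)" unfolding DU using fE fA Sb by (intro finite_UN_I) auto
    have "card (Di A E) \<le> (\<Sum>e'\<in>E. card (\<Union>a\<in>A. S e' a))" unfolding DU by (rule card_UN_le[OF fE])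
    also have "\<dots> \<le> (\<Sum>e'\<in>E. card A * card H)"
    proof (rule sum_mono)
      fix e' assume e': "e' \<in> E"
      have "card (\<Union>a\<in>A. S e' a) \<le> (\<Sum>a\<in>A. card (S e' a))" by (rule card_UN_le[OF fA])
      also have "\<dots> \<le> (\<Sum>a\<in>A. card H)" by (rule sum_mono) (use Sb e' in simp)
      finally show "card (\<Union>a\<in>A. S e' a) \<le> card A * card H" by simp
    qed
    also have "\<dots> = card H * card A * card E" by simp
    finally show "finite (Di A E) \<and> finite (Bd A E) \<and> card (Di A E) \<le> card H * card A * card E"
      using fD unfolding Bd_def boundary_def Di_def[symmetric] by auto
  qed
  have P8g: "act g ` Er X E = Er (act g ` X) E \<and> act g ` Di X E = Di (act g ` X) E \<and>
       act g ` Bd X E = Bd (act g ` X) E"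
    if g: "g \<in> carrier G" and cl: "stab_mult G act m0 E \<subseteq> E" and X: "X \<subseteq> M" for g X
  proof -
    have inj: "inj_on (act g) M" using inj_prop g by blast
    have sur: "act g ` M = M" using surj_prop g by blast
    have sM: "\<And>m. m \<in> M \<Longrightarrow> ?sa m ` E \<subseteq> M" using saM by blast
    have eq: "\<And>m. m \<in> M \<Longrightarrow> ?sa (act g m) ` E = act g ` ?sa m ` E"
      using equivar[OF g _ E cl] by blast
    note T = transport[where f="act g" and s="?sa" and E=E and M=M and A=X, OF inj sur X sM eq]
    have 1: "act g ` Er X E = Er (act g ` X) E" unfolding Er_def erosion_def using T(1) .
    have 2: "act g ` Di X E = Di (act g ` X) E" unfolding Di_def dilation_def using T(2) .
    have 3: "act g ` Bd X E = Bd (act g ` X) E"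
      unfolding Bd_def boundary_def Di_def[symmetric] Er_def[symmetric] 1[symmetric] 2[symmetric]
      by (rule inj_on_image_set_diff[OF inj]) (use EM in blast)+
    show ?thesis using 1 2 3 by blast
  qed
  have P8: "g \<in> carrier G \<longrightarrow> stab_mult G act m0 E \<subseteq> E \<longrightarrow>
       act g ` Er A E = Er (act g ` A) E \<and> act g ` Di A E = Di (act g ` A) E \<and>
       act g ` Bd A E = Bd (act g ` A) E"
  proof (intro impI)
    assume "g \<in> carrier G" "stab_mult G act m0 E \<subseteq> E"
    then show "act g ` Er A E = Er (act g ` A) E \<and> act g ` Di A E = Di (act g ` A) E \<and>
       act g ` Bd A E = Bd (act g ` A) E" by (rule P8g[OF _ _ A])
  qed
  have P9: "m \<in> M \<longrightarrow> stab_mult G act m0 E \<subseteq> E \<longrightarrow>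
       ?sa m ` \<iota> ` Er A E = Er (?sa m ` \<iota> ` A) E \<and>
       ?sa m ` \<iota> ` Di A E = Di (?sa m ` \<iota> ` A) E \<and>
       ?sa m ` \<iota> ` Bd A E = Bd (?sa m ` \<iota> ` A) E"
  proof (intro impI)
    assume m: "m \<in> M" and cl: "stab_mult G act m0 E \<subseteq> E"
    have gcm: "gc m \<in> carrier G" using gcP m by auto
    have pt: "?sa m (\<iota> m') = act (gc m) m'" if m': "m' \<in> M" for m'
    proof -
      have "gc m' \<in> \<iota> m'" unfolding \<iota>_def Gm_def using gcP[OF m'] by simp
      then have "(SOME g. g \<in> \<iota> m') \<in> \<iota> m'" by (rule someI)
      then have s: "(SOME g. g \<in> \<iota> m') \<in> carrier G" "act (SOME g. g \<in> \<iota> m') m0 = m'"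
        unfolding \<iota>_def Gm_def by auto
      show ?thesis unfolding semi_act_def using composition_rule[OF m0M gcm s(1)] s(2) by simp
    qed
    have img: "?sa m ` \<iota> ` X = act (gc m) ` X" if "X \<subseteq> M" for X
      unfolding image_image using pt that by (auto intro!: image_cong)
    show "?sa m ` \<iota> ` Er A E = Er (?sa m ` \<iota> ` A) E \<and>
       ?sa m ` \<iota> ` Di A E = Di (?sa m ` \<iota> ` A) E \<and>
       ?sa m ` \<iota> ` Bd A E = Bd (?sa m ` \<iota> ` A) E"
      using P8g[OF gcm cl A] img[OF A] img[OF EM(1)] img[OF EM(2)] img[OF EM(3)] by simp
  qed
  show ?thesis by (rule conjI[OF P1 conjI[OF P2 conjI[OF P3 conjI[OF P4 conjI[OF P5 conjI[OF P6 conjI[OF P7 conjI[OF P8 P9]]]]]]]])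
qed

end
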